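(* Let $\mathbb{D}=\{z\in\mathbb{C}:|z|<1\}$. For all $z_1,z_2\in\mathbb{D}$, \[ s_{\mathbb{D}}(z_1,z_2)\le \frac{|z_1-z_2|}{2-|z_1+z_2|}, \] and equality holds if and only if the points $z_1,0,z_2$ are collinear.
   Context: The triangular ratio metric of $\mathbb{D}$ is $s_{\mathbb{D}}(z_1,z_2)=\sup_{z\in\partial\mathbb{D}}\frac{|z_1-z_2|}{|z_1-z|+|z-z_2|}$. *)

theory Defs
  imports "HOL-Analysis.Analysis"
begin

definition s_disk :: "complex \<Rightarrow> complex \<Rightarrow> real" where
  "s_disk z1 z2 = (SUP z\<in>sphere 0 1. cmod (z1 - z2) / (cmod (z1 - z) + cmod (z - z2)))"

end

theory Submission
  imports Defs
begin

lemma denom_lower: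
  fixes z1 z2 z :: complex
  assumes "cmod z = 1"
  shows "2 - cmod (z1 + z2) \<le> cmod (z1 - z) + cmod (z - z2)"
proof -
  have "cmod ((z - z1) + (z - z2)) \<le> cmod (z - z1) + cmod (z - z2)"
    by (rule norm_triangle_ineq)
  moreover have "(z - z1) + (z - z2) = 2 * z - (z1 + z2)" by simp
  moreover have "cmod (2 * z) - cmod (z1 + z2) \<le> cmod (2 * z - (z1 + z2))"
    by (rule norm_triangle_ineq2)
  moreover have "cmod (2 * z) = 2" using assms by (simp add: norm_mult)
  ultimately show ?thesis by (simp add: norm_minus_commute)
qed

lemma coll_attain:
  fixes z1 z2 :: complex
  assumes "cmod z1 < 1" "cmod z2 < 1" "collinear {0, z1, z2}"
  shows "\<exists>z. cmod z = 1 \<and> cmod (z1 - z) + cmod (z - z2) = 2 - cmod (z1 + z2)"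
proof -
  have "\<exists>u a b. cmod u = 1 \<and> z1 = complex_of_real a * u \<and> z2 = complex_of_real b * u"
  proof (cases "z1 = 0")
    case True
    show ?thesis
    proof (cases "z2 = 0")
      case True
      then show ?thesis using \<open>z1 = 0\<close> by (intro exI[of _ 1] exI[of _ 0]) auto
    next
      case False
      then show ?thesis using \<open>z1 = 0\<close>
        by (intro exI[of _ "z2 / complex_of_real (cmod z2)"] exI[of _ 0] exI[of _ "cmod z2"])
           (auto simp: norm_divide)
    qed
  next
    case False
    then obtain c where c: "z2 = c *\<^sub>R z1 \<or> z2 = 0" using assms(3) collinear_lemma by blast
    then obtain c' where c': "z2 = c' *\<^sub>R z1" by (metis scale_zero_left)
    show ?thesis using False c'
      by (intro exI[of _ "z1 / complex_of_real (cmod z1)"] exI[of _ "cmod z1"] exI[of _ "c' * cmod z1"])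
         (auto simp: norm_divide scaleR_conv_of_real)
  qed
  then obtain u a b where u: "cmod u = 1" and a: "z1 = complex_of_real a * u" and b: "z2 = complex_of_real b * u"
    by blast
  have "\<bar>a\<bar> < 1" "\<bar>b\<bar> < 1" using assms(1,2) a b u by (auto simp: norm_mult)
  have w: "cmod (z1 + z2) = \<bar>a + b\<bar>" using a b u
    by (simp add: norm_mult flip: distrib_right of_real_add)
  show ?thesis
  proof (cases "a + b \<ge> 0")
    case True
    have "z1 - u = complex_of_real (a - 1) * u" using a by (simp add: algebra_simps)
    hence "cmod (z1 - u) = \<bar>a - 1\<bar>" using u by (simp only: norm_mult norm_of_real) simp
    moreover have "u - z2 = complex_of_real (1 - b) * u" using b by (simp add: algebra_simps)
    hence "cmod (u - z2) = \<bar>1 - b\<bar>" using u by (simp only: norm_mult norm_of_real) simp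
    ultimately show ?thesis using u w True \<open>\<bar>a\<bar> < 1\<close> \<open>\<bar>b\<bar> < 1\<close>
      by (intro exI[of _ u]) auto
  next
    case False
    have "z1 - (-u) = complex_of_real (a + 1) * u" using a by (simp add: algebra_simps)
    hence "cmod (z1 - (-u)) = \<bar>a + 1\<bar>" using u by (simp only: norm_mult norm_of_real) simp
    moreover have "-u - z2 = - (complex_of_real (1 + b) * u)" using b by (simp add: algebra_simps)
    hence "cmod (-u - z2) = \<bar>1 + b\<bar>" using u by (simp only: norm_minus_cancel norm_mult norm_of_real) simp
    ultimately show ?thesis using u w False \<open>\<bar>a\<bar> < 1\<close> \<open>\<bar>b\<bar> < 1\<close>
      by (intro exI[of _ "-u"]) auto
  qed
qed


lemma eq_coll:
  fixes z1 z2 z :: complex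
  assumes h1: "cmod z1 < 1" and h2: "cmod z2 < 1" and hz: "cmod z = 1"
    and eq: "cmod (z1 - z) + cmod (z - z2) = 2 - cmod (z1 + z2)"
  shows "collinear {0, z1, z2}"
proof -
  define w where "w = z1 + z2"
  define \<alpha> where "\<alpha> = cmod (z - z1)"
  define \<beta> where "\<beta> = cmod (z - z2)"
  have t1: "cmod ((z - z1) + (z - z2)) \<le> cmod (z - z1) + cmod (z - z2)"
    by (rule norm_triangle_ineq)
  have sq: "(z - z1) + (z - z2) = 2 * z - w" by (simp add: w_def)
  have t2: "cmod (2 * z) - cmod w \<le> cmod (2 * z - w)"
    by (rule norm_triangle_ineq2)
  have n2: "cmod (2 * z) = 2" using hz by (simp add: norm_mult)
  have t3: "cmod (2 * z - w) \<le> cmod (2 * z) + cmod w"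
    by (rule norm_triangle_ineq4)
  have eq': "\<alpha> + \<beta> = 2 - cmod w" using eq by (simp add: \<alpha>_def \<beta>_def w_def norm_minus_commute)
  have t1': "cmod (2 * z - w) \<le> \<alpha> + \<beta>" using t1 sq unfolding \<alpha>_def \<beta>_def by simp
  have e0: "cmod (2 * z - w) = \<alpha> + \<beta>" "cmod (2 * z - w) = 2 - cmod w"
    using t1' t2 n2 eq' by linarith+
  have e1: "cmod ((z - z1) + (z - z2)) = cmod (z - z1) + cmod (z - z2)"
    using e0 sq unfolding \<alpha>_def \<beta>_def by simp
  have e2: "cmod ((2 * z - w) + w) = cmod (2 * z - w) + cmod w"
    using e0 n2 by simp
  have a1: "\<alpha> *\<^sub>R (z - z2) = \<beta> *\<^sub>R (z - z1)"
    using e1 unfolding norm_triangle_eq \<alpha>_def \<beta>_def .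
  have a2: "cmod (2 * z - w) *\<^sub>R w = cmod w *\<^sub>R (2 * z - w)"
    using e2 unfolding norm_triangle_eq .
  have apos: "\<alpha> > 0" unfolding \<alpha>_def using h1 hz by (metis less_irrefl zero_less_norm_iff right_minus_eq)
  have bpos: "\<beta> > 0" unfolding \<beta>_def using h2 hz by (metis less_irrefl zero_less_norm_iff right_minus_eq)
  show ?thesis
  proof (cases "w = 0")
    case True
    then have "z2 = (-1) *\<^sub>R z1" by (simp add: w_def add_eq_0_iff)
    then show ?thesis unfolding collinear_lemma by blast
  next
    case False
    define r where "r = cmod w"
    have rpos: "r > 0" using False by (simp add: r_def)
    have "cmod (2 * z - w) = 2 - r" using e2 n2 by (simp add: r_def)
    with a2 have "(2 - r) *\<^sub>R w = r *\<^sub>R (2 * z - w)" by (simp add: r_def)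
    hence "2 *\<^sub>R w = (2 * r) *\<^sub>R z"
      by (simp add: algebra_simps scaleR_conv_of_real)
    hence zw: "z = (1 / r) *\<^sub>R w" using rpos
      by (metis (no_types, lifting) divide_self_if mult_2 mult_eq_0_iff nonzero_mult_div_cancel_left
           rpos scaleR_one scaleR_scaleR times_divide_eq_left zero_neq_numeral less_irrefl)
    have "r *\<^sub>R (\<alpha> *\<^sub>R (z - z2)) = r *\<^sub>R (\<beta> *\<^sub>R (z - z1))" using a1 by simp
    hence "r *\<^sub>R ((\<alpha> - \<beta> + r * \<beta>) *\<^sub>R z1) = r *\<^sub>R ((\<beta> - \<alpha> + r * \<alpha>) *\<^sub>R z2)"
      using rpos unfolding zw w_def
      by (simp add: scaleR_conv_of_real field_simps)
    hence "(\<alpha> - \<beta> + r * \<beta>) *\<^sub>R z1 = (\<beta> - \<alpha> + r * \<alpha>) *\<^sub>R z2"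
      using rpos by (metis scaleR_cancel_left less_irrefl)
    moreover have "(\<alpha> - \<beta> + r * \<beta>) + (\<beta> - \<alpha> + r * \<alpha>) > 0"
      using rpos apos bpos by (simp add: algebra_simps add_pos_pos)
    ultimately show ?thesis
    proof -
      assume eqc: "(\<alpha> - \<beta> + r * \<beta>) *\<^sub>R z1 = (\<beta> - \<alpha> + r * \<alpha>) *\<^sub>R z2"
        and sp: "(\<alpha> - \<beta> + r * \<beta>) + (\<beta> - \<alpha> + r * \<alpha>) > 0"
      show ?thesis
      proof (cases "\<alpha> - \<beta> + r * \<beta> = 0")
        case True
        then have "\<beta> - \<alpha> + r * \<alpha> \<noteq> 0" using sp by linarith
        then have "z2 = 0" using eqc True by simp
        then show ?thesis unfolding collinear_lemma by blast
      next
        case False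
        then have "z1 = ((\<beta> - \<alpha> + r * \<alpha>) / (\<alpha> - \<beta> + r * \<beta>)) *\<^sub>R z2"
          using eqc by (metis (no_types, lifting) divide_inverse_commute scaleR_scaleR
             inverse_eq_divide left_inverse scaleR_one mult.commute)
        then have "collinear {0, z2, z1}" unfolding collinear_lemma by blast
        then show ?thesis by (simp add: insert_commute)
      qed
    qed
  qed
qed


theorem theorem2p2:
  fixes z1 z2 :: complex
  assumes "z1 \<in> ball 0 1" and "z2 \<in> ball 0 1"
  shows "s_disk z1 z2 \<le> cmod (z1 - z2) / (2 - cmod (z1 + z2))
    \<and> (s_disk z1 z2 = cmod (z1 - z2) / (2 - cmod (z1 + z2)) \<longleftrightarrow> collinear {z1, 0, z2})"
proof -
  have h1: "cmod z1 < 1" and h2: "cmod z2 < 1" using assms by auto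
  define f where "f z = cmod (z1 - z2) / (cmod (z1 - z) + cmod (z - z2))" for z
  define B where "B = cmod (z1 - z2) / (2 - cmod (z1 + z2))"
  have wpos: "2 - cmod (z1 + z2) > 0"
    using h1 h2 norm_triangle_ineq[of z1 z2] by linarith
  have Dpos: "cmod (z1 - z) + cmod (z - z2) > 0" if "z \<in> sphere 0 1" for z
    using denom_lower[of z z1 z2] that wpos by simp
  have fB: "f z \<le> B" if "z \<in> sphere 0 1" for z
    unfolding f_def B_def
    by (rule divide_left_mono) (use denom_lower[of z z1 z2] that wpos in auto)
  have ne: "sphere (0::complex) 1 \<noteq> {}" by (simp add: sphere_def) (metis norm_one)
  have sd: "s_disk z1 z2 = (SUP z\<in>sphere 0 1. f z)" unfolding s_disk_def f_def by simp
  have le: "s_disk z1 z2 \<le> B" unfolding sd by (rule cSUP_least[OF ne fB])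
  have bdd: "bdd_above (f ` sphere 0 1)" using fB by (intro bdd_aboveI2[where M=B]) auto
  have coll: "collinear {z1, 0, z2} \<longleftrightarrow> collinear {0, z1, z2}" by (simp add: insert_commute)
  have "s_disk z1 z2 = B \<longleftrightarrow> collinear {0, z1, z2}"
  proof
    assume "collinear {0, z1, z2}"
    then obtain z where z: "cmod z = 1" "cmod (z1 - z) + cmod (z - z2) = 2 - cmod (z1 + z2)"
      using coll_attain h1 h2 by blast
    have "f z = B" unfolding f_def B_def z(2) ..
    moreover have "f z \<le> s_disk z1 z2" unfolding sd
      by (rule cSUP_upper[OF _ bdd]) (use z in simp)
    ultimately show "s_disk z1 z2 = B" using le by simp
  next
    assume eqB: "s_disk z1 z2 = B"
    show "collinear {0, z1, z2}"
    proof (cases "z1 = z2")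
      case True
      then show ?thesis unfolding collinear_lemma by (metis scaleR_one)
    next
      case False
      have cont: "continuous_on (sphere 0 1) f"
        unfolding f_def using Dpos
        by (intro continuous_intros) (auto simp: less_le)
      obtain z where z: "z \<in> sphere 0 1" and zmax: "\<forall>y\<in>sphere 0 1. f y \<le> f z"
        using continuous_attains_sup[OF compact_sphere ne cont] by blast
      have "s_disk z1 z2 \<le> f z" unfolding sd by (rule cSUP_least[OF ne]) (use zmax in auto)
      moreover have "f z \<le> s_disk z1 z2" unfolding sd
        by (rule cSUP_upper[OF z bdd])
      ultimately have "f z = B" using eqB by simp
      then have "cmod (z1 - z) + cmod (z - z2) = 2 - cmod (z1 + z2)"
        unfolding f_def B_def using False wpos Dpos[OF z]
        by (simp add: divide_simps split: if_splits)
      then show ?thesis using eq_coll h1 h2 z by simp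
    qed
  qed
  then show ?thesis using le coll by (simp add: B_def)
qed

end
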